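(* Let $B\to K\leftarrow C$ be ring homomorphisms with $C\to K$ surjective, $A=B\times_K C$, and $X=\mathrm{Spec}\,A$, $Y=\mathrm{Spec}\,B$, $Z=\mathrm{Spec}\,C$, $T=\mathrm{Spec}\,K$, with the induced morphisms ($Y\to X$ is the closed immersion defined by the kernel of $A\to B$, $T\to Z$ the closed immersion). Let $R$ be a valuation ring which is not a field, $S=\mathrm{Spec}\,R$ with closed point $s$, and $f:S\to X$ a morphism with $f^{-1}(Y)=\{s\}$. Then $f$ admits a unique lifting $g:S\to Z$ (i.e., $f$ is the composition of $g$ with $Z\to X$), and this lifting satisfies $g^{-1}(T)=\{s\}$. *)

theory Defs
  imports "HOL-Algebra.Algebra"
begin

definition fibre_ring ::
  "('b, 'm) ring_scheme \<Rightarrow> ('c, 'n) ring_scheme \<Rightarrow> ('b \<Rightarrow> 'k) \<Rightarrow> ('c \<Rightarrow> 'k) \<Rightarrow> ('b \<times> 'c) ring" where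
  "fibre_ring B C \<beta> \<gamma> =
     \<lparr>partial_object.carrier = {(b, c). b \<in> carrier B \<and> c \<in> carrier C \<and> \<beta> b = \<gamma> c},
      monoid.mult = (\<lambda>x y. (fst x \<otimes>\<^bsub>B\<^esub> fst y, snd x \<otimes>\<^bsub>C\<^esub> snd y)),
      monoid.one = (\<one>\<^bsub>B\<^esub>, \<one>\<^bsub>C\<^esub>),
      ring.zero = (\<zero>\<^bsub>B\<^esub>, \<zero>\<^bsub>C\<^esub>),
      ring.add = (\<lambda>x y. (fst x \<oplus>\<^bsub>B\<^esub> fst y, snd x \<oplus>\<^bsub>C\<^esub> snd y))\<rparr>"

definition Spec_pts :: "('a, 'm) ring_scheme \<Rightarrow> 'a set set" where
  "Spec_pts R = {P. primeideal P R}"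

definition Spec_map :: "('a, 'm) ring_scheme \<Rightarrow> ('a \<Rightarrow> 'r) \<Rightarrow> 'r set \<Rightarrow> 'a set" where
  "Spec_map A \<phi> P = {a \<in> carrier A. \<phi> a \<in> P}"

definition valuation_ring :: "('a, 'm) ring_scheme \<Rightarrow> bool" where
  "valuation_ring R \<longleftrightarrow> domain R \<and>
     (\<forall>a \<in> carrier R. \<forall>b \<in> carrier R.
        (\<exists>c \<in> carrier R. b = a \<otimes>\<^bsub>R\<^esub> c) \<or> (\<exists>c \<in> carrier R. a = b \<otimes>\<^bsub>R\<^esub> c))"

end

theory Submission
  imports Defs
begin

lemma fr_mem[simp]: "(x \<in> carrier (fibre_ring B C \<beta> \<gamma>)) \<longleftrightarrow> fst x \<in> carrier B \<and> snd x \<in> carrier C \<and> \<beta> (fst x) = \<gamma> (snd x)"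
  by (cases x) (simp add: fibre_ring_def)

lemma phi_mult:
  assumes "\<phi> \<in> ring_hom (fibre_ring B C \<beta> \<gamma>) R"
    "(a,b) \<in> carrier (fibre_ring B C \<beta> \<gamma>)" "(c,d) \<in> carrier (fibre_ring B C \<beta> \<gamma>)"
  shows "\<phi> (a \<otimes>\<^bsub>B\<^esub> c, b \<otimes>\<^bsub>C\<^esub> d) = \<phi> (a,b) \<otimes>\<^bsub>R\<^esub> \<phi> (c,d)"
  using ring_hom_mult[OF assms] by (simp add: fibre_ring_def)

lemma phi_add:
  assumes "\<phi> \<in> ring_hom (fibre_ring B C \<beta> \<gamma>) R"
    "(a,b) \<in> carrier (fibre_ring B C \<beta> \<gamma>)" "(c,d) \<in> carrier (fibre_ring B C \<beta> \<gamma>)"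
  shows "\<phi> (a \<oplus>\<^bsub>B\<^esub> c, b \<oplus>\<^bsub>C\<^esub> d) = \<phi> (a,b) \<oplus>\<^bsub>R\<^esub> \<phi> (c,d)"
  using ring_hom_add[OF assms] by (simp add: fibre_ring_def)

lemma phi_one:
  assumes "\<phi> \<in> ring_hom (fibre_ring B C \<beta> \<gamma>) R"
  shows "\<phi> (\<one>\<^bsub>B\<^esub>, \<one>\<^bsub>C\<^esub>) = \<one>\<^bsub>R\<^esub>"
  using ring_hom_one[OF assms] by (simp add: fibre_ring_def)

lemma phi_closed:
  assumes "\<phi> \<in> ring_hom (fibre_ring B C \<beta> \<gamma>) R"
    "(a,b) \<in> carrier (fibre_ring B C \<beta> \<gamma>)"
  shows "\<phi> (a,b) \<in> carrier R"
  using ring_hom_closed[OF assms] .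

lemma (in cring) ideal_crit:
  assumes "I \<subseteq> carrier R" "\<zero> \<in> I" "\<And>a b. a \<in> I \<Longrightarrow> b \<in> I \<Longrightarrow> a \<oplus> b \<in> I"
    "\<And>a x. a \<in> I \<Longrightarrow> x \<in> carrier R \<Longrightarrow> x \<otimes> a \<in> I"
  shows "ideal I R"
proof (rule idealI[OF ring_axioms])
  show "subgroup I (add_monoid R)"
  proof (rule subgroup.intro)
    show "I \<subseteq> carrier (add_monoid R)" using assms(1) by simp
    show "\<And>x y. x \<in> I \<Longrightarrow> y \<in> I \<Longrightarrow> x \<otimes>\<^bsub>add_monoid R\<^esub> y \<in> I" using assms(3) by simp
    show "\<one>\<^bsub>add_monoid R\<^esub> \<in> I" using assms(2) by simp
    fix x assume x: "x \<in> I"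
    have xc: "x \<in> carrier R" using x assms(1) by blast
    have "\<ominus> x = (\<ominus> \<one>) \<otimes> x" using xc by (simp add: l_minus)
    moreover have "(\<ominus> \<one>) \<otimes> x \<in> I" using assms(4) x by simp
    ultimately have "\<ominus> x \<in> I" by simp
    then show "inv\<^bsub>add_monoid R\<^esub> x \<in> I" by (simp add: a_inv_def)
  qed
  show "\<And>a x. a \<in> I \<Longrightarrow> x \<in> carrier R \<Longrightarrow> x \<otimes> a \<in> I" by (rule assms(4))
  fix a x assume a: "a \<in> I" and x: "x \<in> carrier R"
  have ac: "a \<in> carrier R" using a assms(1) by blast
  have "a \<otimes> x = x \<otimes> a" using ac x by (rule m_comm)
  then show "a \<otimes> x \<in> I" using assms(4)[OF a x] by simp
qed

lemma (in cring) unitI': "v \<in> carrier R \<Longrightarrow> w \<in> carrier R \<Longrightarrow> v \<otimes> w = \<one> \<Longrightarrow> v \<in> Units R"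
proof -
  assume a: "v \<in> carrier R" "w \<in> carrier R" "v \<otimes> w = \<one>"
  then have "w \<otimes> v = \<one>" by (simp add: m_comm)
  with a show ?thesis unfolding Units_def by blast
qed

lemma G:
  fixes B :: "('b, 'm1) ring_scheme" and C :: "('c, 'm2) ring_scheme"
    and K :: "('k, 'm3) ring_scheme" and R :: "('r, 'm4) ring_scheme"
    and \<beta> :: "'b \<Rightarrow> 'k" and \<gamma> :: "'c \<Rightarrow> 'k" and \<phi> :: "'b \<times> 'c \<Rightarrow> 'r"
  assumes cB: "cring B" and cC: "cring C" and cK: "cring K" and cR: "cring R"
    and hb: "\<beta> \<in> ring_hom B K" and hg: "\<gamma> \<in> ring_hom C K"
    and surj: "\<gamma> ` carrier C = carrier K"
    and hphi: "\<phi> \<in> ring_hom (fibre_ring B C \<beta> \<gamma>) R"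
    and P: "primeideal P R"
    and ker: "\<And>d. d \<in> carrier C \<Longrightarrow> \<gamma> d = \<zero>\<^bsub>K\<^esub> \<Longrightarrow> \<phi> (\<zero>\<^bsub>B\<^esub>, d) \<in> P"
  shows "Spec_map (fibre_ring B C \<beta> \<gamma>) \<phi> P \<in> Spec_map (fibre_ring B C \<beta> \<gamma>) fst ` Spec_pts B"
proof -
  let ?A = "fibre_ring B C \<beta> \<gamma>"
  interpret B: cring B by fact
  interpret C: cring C by fact
  interpret K: cring K by fact
  interpret R: cring R by fact
  interpret P: primeideal P R by fact
  interpret b: ring_hom_cring B K \<beta> by unfold_locales (rule hb)
  interpret g: ring_hom_cring C K \<gamma> by unfold_locales (rule hg)
  have lift: "\<exists>c\<in>carrier C. \<gamma> c = \<beta> b" if "b \<in> carrier B" for b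
    using surj that by (metis b.hom_closed imageE)
  have eqv: "\<phi> (b,c) \<in> P" if "(b,c) \<in> carrier ?A" "(b,c') \<in> carrier ?A" "\<phi> (b,c') \<in> P" for b c c'
  proof -
    let ?d = "c \<ominus>\<^bsub>C\<^esub> c'"
    have bc: "b \<in> carrier B" "c \<in> carrier C" "c' \<in> carrier C" "\<beta> b = \<gamma> c" "\<beta> b = \<gamma> c'" using that by auto
    have dC: "?d \<in> carrier C" using bc by simp
    have gd: "\<gamma> ?d = \<zero>\<^bsub>K\<^esub>" using bc by (simp add: a_minus_def K.r_neg)
    have e: "(b, c) = (b \<oplus>\<^bsub>B\<^esub> \<zero>\<^bsub>B\<^esub>, c' \<oplus>\<^bsub>C\<^esub> ?d)" using bc(1-3)
      by (simp add: a_minus_def C.a_comm[of c "\<ominus>\<^bsub>C\<^esub> c'"] C.r_neg2)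
    have "\<phi> (b,c) = \<phi> (b,c') \<oplus>\<^bsub>R\<^esub> \<phi> (\<zero>\<^bsub>B\<^esub>, ?d)"
    proof -
      have A2: "(\<zero>\<^bsub>B\<^esub>, ?d) \<in> carrier ?A"
        unfolding fr_mem fst_conv snd_conv gd b.hom_zero using dC by simp
      show ?thesis by (subst e, rule phi_add[OF hphi that(2) A2])
    qed
    then show ?thesis using that(3) ker[OF dC gd] by simp
  qed
  define Q where "Q = {b \<in> carrier B. \<exists>c. (b,c) \<in> carrier ?A \<and> \<phi> (b,c) \<in> P}"
  have memQ: "b \<in> Q \<longleftrightarrow> \<phi> (b,c) \<in> P" if "(b,c) \<in> carrier ?A" for b c
    using that eqv unfolding Q_def by auto
  have SM: "Spec_map ?A fst Q = Spec_map ?A \<phi> P"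
    unfolding Spec_map_def
  proof (intro Set.set_eqI)
    fix x :: "'b \<times> 'c"
    obtain b c where x: "x = (b, c)" by (cases x)
    show "x \<in> {a \<in> carrier ?A. fst a \<in> Q} \<longleftrightarrow> x \<in> {a \<in> carrier ?A. \<phi> a \<in> P}"
      using memQ[of b c] unfolding x by auto
  qed
  have "ideal Q B"
  proof (rule B.ideal_crit)
    show "Q \<subseteq> carrier B" unfolding Q_def by auto
    show "\<zero>\<^bsub>B\<^esub> \<in> Q" using memQ[of "\<zero>\<^bsub>B\<^esub>" "\<zero>\<^bsub>C\<^esub>"] ker[of "\<zero>\<^bsub>C\<^esub>"] by simp
    show "a \<oplus>\<^bsub>B\<^esub> b \<in> Q" if H: "a \<in> Q" "b \<in> Q" for a b
    proof -
      obtain c where c: "(a,c) \<in> carrier ?A" "\<phi> (a,c) \<in> P" using H Q_def by auto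
      obtain d where d: "(b,d) \<in> carrier ?A" "\<phi> (b,d) \<in> P" using H Q_def by auto
      have "\<phi> (a \<oplus>\<^bsub>B\<^esub> b, c \<oplus>\<^bsub>C\<^esub> d) \<in> P" using phi_add[OF hphi c(1) d(1)] c d by simp
      moreover have "(a \<oplus>\<^bsub>B\<^esub> b, c \<oplus>\<^bsub>C\<^esub> d) \<in> carrier ?A" using c d by simp
      ultimately show ?thesis using memQ by blast
    qed
    show "x \<otimes>\<^bsub>B\<^esub> a \<in> Q" if H: "a \<in> Q" "x \<in> carrier B" for a x
    proof -
      obtain c where c: "(a,c) \<in> carrier ?A" "\<phi> (a,c) \<in> P" using H Q_def by auto
      obtain y where y: "y \<in> carrier C" "\<gamma> y = \<beta> x" using lift H(2) by blast
      have xy: "(x,y) \<in> carrier ?A" using y that by simp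
      have "\<phi> (x \<otimes>\<^bsub>B\<^esub> a, y \<otimes>\<^bsub>C\<^esub> c) \<in> P" using phi_mult[OF hphi xy c(1)] c
          phi_closed[OF hphi xy] by (simp add: P.I_l_closed)
      moreover have "(x \<otimes>\<^bsub>B\<^esub> a, y \<otimes>\<^bsub>C\<^esub> c) \<in> carrier ?A" using c xy by simp
      ultimately show ?thesis using memQ by blast
    qed
  qed
  moreover have "carrier B \<noteq> Q"
  proof
    assume "carrier B = Q"
    then have "\<one>\<^bsub>B\<^esub> \<in> Q" by auto
    then have "\<one>\<^bsub>R\<^esub> \<in> P" using memQ[of "\<one>\<^bsub>B\<^esub>" "\<one>\<^bsub>C\<^esub>"] phi_one[OF hphi] by simp
    then show False using P.I_notcarr P.one_imp_carrier by blast
  qed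
  moreover have "a \<in> Q \<or> b \<in> Q" if H: "a \<in> carrier B" "b \<in> carrier B" "a \<otimes>\<^bsub>B\<^esub> b \<in> Q" for a b
  proof -
    obtain c where c: "c \<in> carrier C" "\<gamma> c = \<beta> a" using lift H by blast
    obtain d where d: "d \<in> carrier C" "\<gamma> d = \<beta> b" using lift H by blast
    have ac: "(a,c) \<in> carrier ?A" and bd: "(b,d) \<in> carrier ?A" using c d that by auto
    have abcd: "(a \<otimes>\<^bsub>B\<^esub> b, c \<otimes>\<^bsub>C\<^esub> d) \<in> carrier ?A" using ac bd by simp
    have "\<phi> (a \<otimes>\<^bsub>B\<^esub> b, c \<otimes>\<^bsub>C\<^esub> d) \<in> P" using memQ[OF abcd] H(3) by blast
    then have "\<phi> (a,c) \<otimes>\<^bsub>R\<^esub> \<phi> (b,d) \<in> P" using phi_mult[OF hphi ac bd] by simp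
    then have "\<phi> (a,c) \<in> P \<or> \<phi> (b,d) \<in> P"
      using P.I_prime phi_closed[OF hphi ac] phi_closed[OF hphi bd] by blast
    then show ?thesis using memQ ac bd by blast
  qed
  ultimately have "primeideal Q B" by (intro primeidealI) (auto intro: cB)
  then show ?thesis using SM unfolding Spec_pts_def by (metis (mono_tags) image_eqI mem_Collect_eq)
qed

lemma (in domain) pow_prime:
  assumes vR: "v \<in> carrier R" and vnu: "v \<notin> Units R" and vnz: "v \<noteq> \<zero>"
    and val: "\<And>a b. a \<in> carrier R \<Longrightarrow> b \<in> carrier R \<Longrightarrow> (\<exists>c\<in>carrier R. b = a \<otimes> c) \<or> (\<exists>c\<in>carrier R. a = b \<otimes> c)"
  defines "p \<equiv> {r \<in> carrier R. \<forall>n::nat. \<exists>w\<in>carrier R. r = v [^] n \<otimes> w}"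
  shows "primeideal p R" "v \<notin> p" "\<not> maximalideal p R"
proof -
  have unitI: "False" if "w \<in> carrier R" "\<one> = v \<otimes> w" for w
    using unitI'[OF vR that(1) that(2)[symmetric]] vnu by blast
  have pC: "p \<subseteq> carrier R" unfolding p_def by blast
  have pmem: "\<exists>w\<in>carrier R. r = v [^] n \<otimes> w" if "r \<in> p" for r and n :: nat
    using that unfolding p_def mem_Collect_eq by (elim conjE allE) assumption
  have pI: "r \<in> p" if "r \<in> carrier R" "\<And>n::nat. \<exists>w\<in>carrier R. r = v [^] n \<otimes> w" for r
    unfolding p_def using that by (intro CollectI conjI allI that)
  show vnp: "v \<notin> p"
  proof
    assume vp: "v \<in> p"
    from pmem[OF vp, of 2] obtain w where w1: "w \<in> carrier R" and w2: "v = v [^] (2::nat) \<otimes> w" ..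
    have w: "w \<in> carrier R" "v [^] (2::nat) \<otimes> w = v" using w1 w2[symmetric] by auto
    have e1: "v \<otimes> (v \<otimes> w) = v [^] (2::nat) \<otimes> w" using vR w(1)
      by (simp add: numeral_2_eq_2 m_assoc)
    have "v \<otimes> \<one> = v \<otimes> (v \<otimes> w)" using e1 w(2) vR by simp
    then have "\<one> = v \<otimes> w" using m_lcancel[OF vnz vR one_closed m_closed[OF vR w(1)]] by blast
    then show False using unitI w by blast
  qed
  show pp: "primeideal p R"
  proof (rule primeidealI)
    show "ideal p R"
    proof (rule ideal_crit)
      show "p \<subseteq> carrier R" by (rule pC)
      show "\<zero> \<in> p"
      proof (rule pI)
        show "\<zero> \<in> carrier R" by simp
        fix n :: nat
        have "\<zero> = v [^] n \<otimes> \<zero>" using vR by simp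
        then show "\<exists>w\<in>carrier R. \<zero> = v [^] n \<otimes> w" by blast
      qed
      show "a \<oplus> b \<in> p" if H: "a \<in> p" "b \<in> p" for a b
      proof (rule pI)
        show "a \<oplus> b \<in> carrier R" using subsetD[OF pC that(1)] subsetD[OF pC that(2)] by (rule add.m_closed)
        fix n :: nat
        obtain w1 where w1: "w1 \<in> carrier R" "a = v [^] n \<otimes> w1" using pmem[OF H(1), of n] by blast
        obtain w2 where w2: "w2 \<in> carrier R" "b = v [^] n \<otimes> w2" using pmem[OF H(2), of n] by blast
        have "a \<oplus> b = v [^] n \<otimes> (w1 \<oplus> w2)" using w1 w2 vR by (simp add: r_distr)
        then show "\<exists>w\<in>carrier R. a \<oplus> b = v [^] n \<otimes> w" using w1 w2 by blast
      qed
      show "x \<otimes> a \<in> p" if H: "a \<in> p" "x \<in> carrier R" for a x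
      proof (rule pI)
        show "x \<otimes> a \<in> carrier R" using that(2) subsetD[OF pC that(1)] by (rule m_closed)
        fix n :: nat
        obtain w1 where w1: "w1 \<in> carrier R" "a = v [^] n \<otimes> w1" using pmem[OF H(1), of n] by blast
        have "x \<otimes> a = v [^] n \<otimes> (x \<otimes> w1)" using w1 vR that(2) by (simp add: m_lcomm)
        then show "\<exists>w\<in>carrier R. x \<otimes> a = v [^] n \<otimes> w" using w1 that(2) by blast
      qed
    qed
    show "cring R" by (rule is_cring)
    show "carrier R \<noteq> p"
    proof
      assume "carrier R = p"
      then have "\<one> \<in> p" by auto
      then obtain w where "w \<in> carrier R" "\<one> = v [^] (1::nat) \<otimes> w" using pmem by blast
      then have "w \<in> carrier R" "\<one> = v \<otimes> w" using vR by simp_all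
      then show False by (rule unitI)
    qed
    show "a \<in> p \<or> b \<in> p" if ab: "a \<in> carrier R" "b \<in> carrier R" "a \<otimes> b \<in> p" for a b
    proof (rule ccontr)
      assume "\<not> (a \<in> p \<or> b \<in> p)"
      then have anp: "a \<notin> p" and bnp: "b \<notin> p" by auto
      have "\<not> (\<forall>n::nat. \<exists>w\<in>carrier R. a = v [^] n \<otimes> w)"
        using pI[OF ab(1)] anp by blast
      then obtain k :: nat where k: "\<not> (\<exists>w\<in>carrier R. a = v [^] k \<otimes> w)" by blast
      have "\<not> (\<forall>n::nat. \<exists>w\<in>carrier R. b = v [^] n \<otimes> w)"
        using pI[OF ab(2)] bnp by blast
      then obtain l :: nat where l: "\<not> (\<exists>w\<in>carrier R. b = v [^] l \<otimes> w)" by blast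
      obtain u where u: "u \<in> carrier R" "v [^] k = a \<otimes> u"
        using val[OF nat_pow_closed[OF vR] ab(1), of k] k by blast
      obtain u' where u': "u' \<in> carrier R" "v [^] l = b \<otimes> u'"
        using val[OF nat_pow_closed[OF vR] ab(2), of l] l by blast
      obtain w where w: "w \<in> carrier R" "a \<otimes> b = v [^] (k + l + 1) \<otimes> w"
        using pmem[OF ab(3), of "k + l + 1"] by blast
      have vk: "v [^] (k + l) \<in> carrier R" using vR by simp
      have "v [^] (k + l) \<otimes> \<one> = v [^] k \<otimes> v [^] l"
        using vR by (simp add: nat_pow_mult)
      also have "\<dots> = (a \<otimes> b) \<otimes> (u \<otimes> u')"
        using u u' ab by (simp add: m_ac)
      also have "\<dots> = v [^] (k + l) \<otimes> (v \<otimes> (w \<otimes> (u \<otimes> u')))"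
        using w u u' vR by (simp add: m_ac)
      finally have "v [^] (k + l) \<otimes> \<one> = v [^] (k + l) \<otimes> (v \<otimes> (w \<otimes> (u \<otimes> u')))" .
      moreover have "v [^] (n::nat) \<noteq> \<zero>" for n
        by (induction n) (use vR vnz in \<open>simp_all add: integral_iff\<close>)
      ultimately have "\<one> = v \<otimes> (w \<otimes> (u \<otimes> u'))"
        using m_lcancel[OF _ vk one_closed] vR w u u' by simp
      then show False using unitI[OF m_closed[OF w(1) m_closed[OF u(1) u'(1)]]] by blast
    qed
  qed
  show "\<not> maximalideal p R"
  proof
    assume mp: "maximalideal p R"
    have "ideal (PIdl v) R" by (rule cgenideal_ideal[OF vR])
    moreover have "p \<subseteq> PIdl v"
    proof
      fix r assume "r \<in> p"
      then obtain w where "w \<in> carrier R" "r = v [^] (1::nat) \<otimes> w" using pmem by blast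
      then have "r = w \<otimes> v" "w \<in> carrier R" using vR by (simp_all add: m_comm)
      then show "r \<in> PIdl v" unfolding cgenideal_def by blast
    qed
    moreover have "PIdl v \<subseteq> carrier R" using vR unfolding cgenideal_def by auto
    ultimately have "PIdl v = p \<or> PIdl v = carrier R"
      using maximalideal.I_maximal[OF mp] by blast
    moreover have "v \<in> PIdl v"
    proof -
      have "v = \<one> \<otimes> v" using vR by simp
      then show ?thesis unfolding cgenideal_def by blast
    qed
    moreover have "\<one> \<notin> PIdl v"
    proof
      assume "\<one> \<in> PIdl v"
      then obtain x where x: "x \<in> carrier R" "\<one> = x \<otimes> v" unfolding cgenideal_def by blast
      then have "\<one> = v \<otimes> x" using vR by (simp add: m_comm)
      then show False using unitI[OF x(1)] by blast
    qed
    ultimately show False using vnp one_closed by blast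
  qed
qed

theorem lemma3p3p4:
  fixes B :: "('b, 'm1) ring_scheme" and C :: "('c, 'm2) ring_scheme"
    and K :: "('k, 'm3) ring_scheme" and R :: "('r, 'm4) ring_scheme"
    and \<beta> :: "'b \<Rightarrow> 'k" and \<gamma> :: "'c \<Rightarrow> 'k" and \<phi> :: "'b \<times> 'c \<Rightarrow> 'r"
  assumes "cring B" and "cring C" and "cring K"
    and "\<beta> \<in> ring_hom B K" and "\<gamma> \<in> ring_hom C K"
    and "\<gamma> ` carrier C = carrier K"
    and "valuation_ring R" and "\<not> field R"
    and "\<phi> \<in> ring_hom (fibre_ring B C \<beta> \<gamma>) R"
    and "{P \<in> Spec_pts R. Spec_map (fibre_ring B C \<beta> \<gamma>) \<phi> P
            \<in> Spec_map (fibre_ring B C \<beta> \<gamma>) fst ` Spec_pts B}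
         = {P \<in> Spec_pts R. maximalideal P R}"
  shows "\<exists>\<psi> \<in> ring_hom C R.
           (\<forall>x \<in> carrier (fibre_ring B C \<beta> \<gamma>). \<psi> (snd x) = \<phi> x)
         \<and> (\<forall>\<psi>' \<in> ring_hom C R.
              (\<forall>x \<in> carrier (fibre_ring B C \<beta> \<gamma>). \<psi>' (snd x) = \<phi> x)
              \<longrightarrow> (\<forall>c \<in> carrier C. \<psi>' c = \<psi> c))
         \<and> {P \<in> Spec_pts R. Spec_map C \<psi> P \<in> Spec_map C \<gamma> ` Spec_pts K}
             = {P \<in> Spec_pts R. maximalideal P R}"
proof -
  let ?A = "fibre_ring B C \<beta> \<gamma>"
  note hphi = assms(9)
  have domR: "domain R" using assms(7) by (simp add: valuation_ring_def)
  have val: "(\<exists>c\<in>carrier R. b = a \<otimes>\<^bsub>R\<^esub> c) \<or> (\<exists>c\<in>carrier R. a = b \<otimes>\<^bsub>R\<^esub> c)"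
    if "a \<in> carrier R" "b \<in> carrier R" for a b
    using assms(7) that unfolding valuation_ring_def by blast
  interpret B: cring B by fact
  interpret C: cring C by fact
  interpret K: cring K by fact
  interpret R: domain R by (rule domR)
  interpret b: ring_hom_cring B K \<beta> by unfold_locales (rule assms(4))
  interpret g: ring_hom_cring C K \<gamma> by unfold_locales (rule assms(5))
  have G': "maximalideal P R" if "primeideal P R"
    "\<And>d. d \<in> carrier C \<Longrightarrow> \<gamma> d = \<zero>\<^bsub>K\<^esub> \<Longrightarrow> \<phi> (\<zero>\<^bsub>B\<^esub>, d) \<in> P" for P
  proof -
    have "Spec_map ?A \<phi> P \<in> Spec_map ?A fst ` Spec_pts B"
      by (rule G[OF assms(1-3) R.is_cring assms(4-6,9) that])
    then have "P \<in> {P \<in> Spec_pts R. Spec_map ?A \<phi> P \<in> Spec_map ?A fst ` Spec_pts B}"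
      using that(1) by (simp add: Spec_pts_def)
    then show ?thesis using assms(10) by simp
  qed
  have kmul: "\<phi> (\<zero>\<^bsub>B\<^esub>, x) \<otimes>\<^bsub>R\<^esub> \<phi> (\<zero>\<^bsub>B\<^esub>, y) = \<phi> (\<zero>\<^bsub>B\<^esub>, x \<otimes>\<^bsub>C\<^esub> y)"
    if "x \<in> carrier C" "\<gamma> x = \<zero>\<^bsub>K\<^esub>" "y \<in> carrier C" "\<gamma> y = \<zero>\<^bsub>K\<^esub>" for x y
    using phi_mult[OF hphi, of "\<zero>\<^bsub>B\<^esub>" x "\<zero>\<^bsub>B\<^esub>" y] that by simp
  have kC: "\<phi> (\<zero>\<^bsub>B\<^esub>, x) \<in> carrier R" if "x \<in> carrier C" "\<gamma> x = \<zero>\<^bsub>K\<^esub>" for x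
    using phi_closed[OF hphi, of "\<zero>\<^bsub>B\<^esub>" x] that by simp
  obtain c0 where c0: "c0 \<in> carrier C" "\<gamma> c0 = \<zero>\<^bsub>K\<^esub>" and t0: "\<phi> (\<zero>\<^bsub>B\<^esub>, c0) \<noteq> \<zero>\<^bsub>R\<^esub>"
  proof -
    have "\<exists>c0. c0 \<in> carrier C \<and> \<gamma> c0 = \<zero>\<^bsub>K\<^esub> \<and> \<phi> (\<zero>\<^bsub>B\<^esub>, c0) \<noteq> \<zero>\<^bsub>R\<^esub>"
    proof (rule ccontr)
      assume "\<not> ?thesis"
      then have "maximalideal {\<zero>\<^bsub>R\<^esub>} R" by (intro G'[OF R.zeroprimeideal]) auto
      then have "field R" using R.zeromaximalideal_eq_field by simp
      with assms(8) show False by simp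
    qed
    then show ?thesis using that by blast
  qed
  define t where "t = \<phi> (\<zero>\<^bsub>B\<^esub>, c0)"
  have tR: "t \<in> carrier R" using kC c0 t_def by simp
  have tnz: "t \<noteq> \<zero>\<^bsub>R\<^esub>" using t0 t_def by simp
  have gcc0: "\<gamma> (c \<otimes>\<^bsub>C\<^esub> c0) = \<zero>\<^bsub>K\<^esub>" if "c \<in> carrier C" for c using that c0 by simp


  have div: "\<exists>r\<in>carrier R. \<phi> (\<zero>\<^bsub>B\<^esub>, c \<otimes>\<^bsub>C\<^esub> c0) = t \<otimes>\<^bsub>R\<^esub> r" if cC: "c \<in> carrier C" for c
  proof -
    define s where "s = \<phi> (\<zero>\<^bsub>B\<^esub>, c \<otimes>\<^bsub>C\<^esub> c0)"
    have sR: "s \<in> carrier R" using kC gcc0 cC c0 s_def by simp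
    show ?thesis
    proof (cases "\<exists>r\<in>carrier R. s = t \<otimes>\<^bsub>R\<^esub> r")
      case True then show ?thesis using s_def by simp
    next
      case False
      then obtain v where vR: "v \<in> carrier R" and tsv: "t = s \<otimes>\<^bsub>R\<^esub> v" using val[OF tR sR] by blast
      have vnz: "v \<noteq> \<zero>\<^bsub>R\<^esub>" using tsv tnz sR by auto
      have snz: "s \<noteq> \<zero>\<^bsub>R\<^esub>" using tsv tnz vR by auto
      show ?thesis
      proof (cases "v \<in> Units R")
        case True
        have "s = t \<otimes>\<^bsub>R\<^esub> inv\<^bsub>R\<^esub> v" using tsv True sR vR
          by (simp add: R.m_assoc R.Units_r_inv)
        then show ?thesis using s_def True by auto
      next
        case vnu: False
        have step: "\<phi> (\<zero>\<^bsub>B\<^esub>, e) = v \<otimes>\<^bsub>R\<^esub> \<phi> (\<zero>\<^bsub>B\<^esub>, e \<otimes>\<^bsub>C\<^esub> c)"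
          if e: "e \<in> carrier C" "\<gamma> e = \<zero>\<^bsub>K\<^esub>" for e
        proof -
          have ec: "e \<otimes>\<^bsub>C\<^esub> c \<in> carrier C" "\<gamma> (e \<otimes>\<^bsub>C\<^esub> c) = \<zero>\<^bsub>K\<^esub>" using e cC by auto
          have 1: "s \<otimes>\<^bsub>R\<^esub> \<phi> (\<zero>\<^bsub>B\<^esub>, e) = \<phi> (\<zero>\<^bsub>B\<^esub>, (c \<otimes>\<^bsub>C\<^esub> c0) \<otimes>\<^bsub>C\<^esub> e)"
            unfolding s_def by (rule kmul) (use cC c0 e gcc0 in auto)
          have 2: "s \<otimes>\<^bsub>R\<^esub> (v \<otimes>\<^bsub>R\<^esub> \<phi> (\<zero>\<^bsub>B\<^esub>, e \<otimes>\<^bsub>C\<^esub> c)) = \<phi> (\<zero>\<^bsub>B\<^esub>, c0 \<otimes>\<^bsub>C\<^esub> (e \<otimes>\<^bsub>C\<^esub> c))"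
            using kmul[OF c0 ec] tsv t_def sR vR kC[OF ec] by (simp add: R.m_assoc)
          have "(c \<otimes>\<^bsub>C\<^esub> c0) \<otimes>\<^bsub>C\<^esub> e = c0 \<otimes>\<^bsub>C\<^esub> (e \<otimes>\<^bsub>C\<^esub> c)"
            using cC c0 e by (simp add: C.m_ac)
          then have "s \<otimes>\<^bsub>R\<^esub> \<phi> (\<zero>\<^bsub>B\<^esub>, e) = s \<otimes>\<^bsub>R\<^esub> (v \<otimes>\<^bsub>R\<^esub> \<phi> (\<zero>\<^bsub>B\<^esub>, e \<otimes>\<^bsub>C\<^esub> c))"
            using 1 2 by simp
          then show ?thesis using R.m_lcancel[OF snz sR kC[OF e] R.m_closed[OF vR kC[OF ec]]] by simp
        qed
        have pow: "\<forall>e. e \<in> carrier C \<and> \<gamma> e = \<zero>\<^bsub>K\<^esub> \<longrightarrow> (\<exists>w\<in>carrier R. \<phi> (\<zero>\<^bsub>B\<^esub>, e) = v [^]\<^bsub>R\<^esub> n \<otimes>\<^bsub>R\<^esub> w)" for n :: nat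
        proof (induction n)
          case 0
          then show ?case using kC by auto
        next
          case (Suc n)
          show ?case
          proof (intro allI impI)
            fix e assume e: "e \<in> carrier C \<and> \<gamma> e = \<zero>\<^bsub>K\<^esub>"
            have ec: "e \<otimes>\<^bsub>C\<^esub> c \<in> carrier C \<and> \<gamma> (e \<otimes>\<^bsub>C\<^esub> c) = \<zero>\<^bsub>K\<^esub>" using e cC by auto
            then obtain w where w: "w \<in> carrier R" "\<phi> (\<zero>\<^bsub>B\<^esub>, e \<otimes>\<^bsub>C\<^esub> c) = v [^]\<^bsub>R\<^esub> n \<otimes>\<^bsub>R\<^esub> w"
              using Suc by blast
            have "\<phi> (\<zero>\<^bsub>B\<^esub>, e) = v [^]\<^bsub>R\<^esub> Suc n \<otimes>\<^bsub>R\<^esub> w"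
              using step[of e] e w vR by (simp add: R.m_assoc R.m_comm R.m_lcomm)
            then show "\<exists>w\<in>carrier R. \<phi> (\<zero>\<^bsub>B\<^esub>, e) = v [^]\<^bsub>R\<^esub> Suc n \<otimes>\<^bsub>R\<^esub> w" using w by blast
          qed
        qed
        define p where "p = {r \<in> carrier R. \<forall>n::nat. \<exists>w\<in>carrier R. r = v [^]\<^bsub>R\<^esub> n \<otimes>\<^bsub>R\<^esub> w}"
        have pr: "primeideal p R" "\<not> maximalideal p R"
          using R.pow_prime[OF vR vnu vnz val] unfolding p_def by blast+
        have "\<phi> (\<zero>\<^bsub>B\<^esub>, d) \<in> p" if "d \<in> carrier C" "\<gamma> d = \<zero>\<^bsub>K\<^esub>" for d
        proof -
          have "\<phi> (\<zero>\<^bsub>B\<^esub>, d) \<in> carrier R" using kC that by blast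
          moreover have "\<forall>n::nat. \<exists>w\<in>carrier R. \<phi> (\<zero>\<^bsub>B\<^esub>, d) = v [^]\<^bsub>R\<^esub> n \<otimes>\<^bsub>R\<^esub> w"
            using pow that by blast
          ultimately show ?thesis unfolding p_def by blast
        qed
        then have "maximalideal p R" using G' pr(1) by blast
        then show ?thesis using pr(2) by blast
      qed
    qed
  qed
  define \<psi> where "\<psi> c = (SOME r. r \<in> carrier R \<and> \<phi> (\<zero>\<^bsub>B\<^esub>, c \<otimes>\<^bsub>C\<^esub> c0) = t \<otimes>\<^bsub>R\<^esub> r)" for c
  have psi: "\<psi> c \<in> carrier R \<and> \<phi> (\<zero>\<^bsub>B\<^esub>, c \<otimes>\<^bsub>C\<^esub> c0) = t \<otimes>\<^bsub>R\<^esub> \<psi> c" if "c \<in> carrier C" for c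
    unfolding \<psi>_def by (rule someI_ex) (use div[OF that] in blast)
  have uniq: "\<psi> c = r" if "c \<in> carrier C" "r \<in> carrier R" "\<phi> (\<zero>\<^bsub>B\<^esub>, c \<otimes>\<^bsub>C\<^esub> c0) = t \<otimes>\<^bsub>R\<^esub> r" for c r
    using psi[OF that(1)] that(2,3) R.m_lcancel[OF tnz tR, of "\<psi> c" r] by simp
  have agree: "\<psi> c = \<phi> (b, c)" if bc: "(b, c) \<in> carrier ?A" for b c
  proof (rule uniq)
    show "c \<in> carrier C" using bc by simp
    show "\<phi> (b, c) \<in> carrier R" by (rule phi_closed[OF hphi bc])
    have 0: "(\<zero>\<^bsub>B\<^esub>, c0) \<in> carrier ?A" using c0 by simp
    have "t \<otimes>\<^bsub>R\<^esub> \<phi> (b, c) = \<phi> (\<zero>\<^bsub>B\<^esub> \<otimes>\<^bsub>B\<^esub> b, c0 \<otimes>\<^bsub>C\<^esub> c)"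
      unfolding t_def by (rule phi_mult[OF hphi 0 bc, symmetric])
    also have "\<dots> = \<phi> (\<zero>\<^bsub>B\<^esub>, c \<otimes>\<^bsub>C\<^esub> c0)" using bc c0 by (simp add: C.m_comm)
    finally show "\<phi> (\<zero>\<^bsub>B\<^esub>, c \<otimes>\<^bsub>C\<^esub> c0) = t \<otimes>\<^bsub>R\<^esub> \<phi> (b, c)" by simp
  qed
  have kerpsi: "\<psi> d = \<phi> (\<zero>\<^bsub>B\<^esub>, d)" if "d \<in> carrier C" "\<gamma> d = \<zero>\<^bsub>K\<^esub>" for d
    using agree[of "\<zero>\<^bsub>B\<^esub>" d] that by simp
  have hpsi: "\<psi> \<in> ring_hom C R"
  proof (rule ring_hom_memI)
    show "\<psi> x \<in> carrier R" if "x \<in> carrier C" for x using psi[OF that] by blast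
    show "\<psi> (x \<otimes>\<^bsub>C\<^esub> y) = \<psi> x \<otimes>\<^bsub>R\<^esub> \<psi> y" if xy: "x \<in> carrier C" "y \<in> carrier C" for x y
    proof (rule uniq)
      show "x \<otimes>\<^bsub>C\<^esub> y \<in> carrier C" using xy by simp
      have px: "\<psi> x \<in> carrier R" "\<phi> (\<zero>\<^bsub>B\<^esub>, x \<otimes>\<^bsub>C\<^esub> c0) = t \<otimes>\<^bsub>R\<^esub> \<psi> x" using psi[OF xy(1)] by auto
      have py: "\<psi> y \<in> carrier R" "\<phi> (\<zero>\<^bsub>B\<^esub>, y \<otimes>\<^bsub>C\<^esub> c0) = t \<otimes>\<^bsub>R\<^esub> \<psi> y" using psi[OF xy(2)] by auto
      show pxy: "\<psi> x \<otimes>\<^bsub>R\<^esub> \<psi> y \<in> carrier R" using px py by simp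
      have xyc: "x \<otimes>\<^bsub>C\<^esub> y \<otimes>\<^bsub>C\<^esub> c0 \<in> carrier C" "\<gamma> (x \<otimes>\<^bsub>C\<^esub> y \<otimes>\<^bsub>C\<^esub> c0) = \<zero>\<^bsub>K\<^esub>"
        using xy c0 by auto
      have "t \<otimes>\<^bsub>R\<^esub> \<phi> (\<zero>\<^bsub>B\<^esub>, x \<otimes>\<^bsub>C\<^esub> y \<otimes>\<^bsub>C\<^esub> c0) = \<phi> (\<zero>\<^bsub>B\<^esub>, c0 \<otimes>\<^bsub>C\<^esub> (x \<otimes>\<^bsub>C\<^esub> y \<otimes>\<^bsub>C\<^esub> c0))"
        unfolding t_def by (rule kmul[OF c0 xyc])
      also have "\<dots> = \<phi> (\<zero>\<^bsub>B\<^esub>, (x \<otimes>\<^bsub>C\<^esub> c0) \<otimes>\<^bsub>C\<^esub> (y \<otimes>\<^bsub>C\<^esub> c0))"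
        using xy c0 by (simp add: C.m_ac)
      also have "\<dots> = \<phi> (\<zero>\<^bsub>B\<^esub>, x \<otimes>\<^bsub>C\<^esub> c0) \<otimes>\<^bsub>R\<^esub> \<phi> (\<zero>\<^bsub>B\<^esub>, y \<otimes>\<^bsub>C\<^esub> c0)"
        by (rule kmul[symmetric]) (use xy gcc0 c0 in auto)
      also have "\<dots> = t \<otimes>\<^bsub>R\<^esub> (t \<otimes>\<^bsub>R\<^esub> (\<psi> x \<otimes>\<^bsub>R\<^esub> \<psi> y))"
        using px py tR by (simp add: R.m_ac)
      finally show "\<phi> (\<zero>\<^bsub>B\<^esub>, x \<otimes>\<^bsub>C\<^esub> y \<otimes>\<^bsub>C\<^esub> c0) = t \<otimes>\<^bsub>R\<^esub> (\<psi> x \<otimes>\<^bsub>R\<^esub> \<psi> y)"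
        using R.m_lcancel[OF tnz tR kC[OF xyc] R.m_closed[OF tR pxy]] by simp
    qed
    show "\<psi> (x \<oplus>\<^bsub>C\<^esub> y) = \<psi> x \<oplus>\<^bsub>R\<^esub> \<psi> y" if xy: "x \<in> carrier C" "y \<in> carrier C" for x y
    proof (rule uniq)
      show "x \<oplus>\<^bsub>C\<^esub> y \<in> carrier C" using xy by simp
      have px: "\<psi> x \<in> carrier R" "\<phi> (\<zero>\<^bsub>B\<^esub>, x \<otimes>\<^bsub>C\<^esub> c0) = t \<otimes>\<^bsub>R\<^esub> \<psi> x" using psi[OF xy(1)] by auto
      have py: "\<psi> y \<in> carrier R" "\<phi> (\<zero>\<^bsub>B\<^esub>, y \<otimes>\<^bsub>C\<^esub> c0) = t \<otimes>\<^bsub>R\<^esub> \<psi> y" using psi[OF xy(2)] by auto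
      show "\<psi> x \<oplus>\<^bsub>R\<^esub> \<psi> y \<in> carrier R" using px py by simp
      have "\<phi> (\<zero>\<^bsub>B\<^esub>, (x \<oplus>\<^bsub>C\<^esub> y) \<otimes>\<^bsub>C\<^esub> c0) = \<phi> (\<zero>\<^bsub>B\<^esub> \<oplus>\<^bsub>B\<^esub> \<zero>\<^bsub>B\<^esub>, x \<otimes>\<^bsub>C\<^esub> c0 \<oplus>\<^bsub>C\<^esub> y \<otimes>\<^bsub>C\<^esub> c0)"
        using xy c0 by (simp add: C.l_distr)
      also have "\<dots> = \<phi> (\<zero>\<^bsub>B\<^esub>, x \<otimes>\<^bsub>C\<^esub> c0) \<oplus>\<^bsub>R\<^esub> \<phi> (\<zero>\<^bsub>B\<^esub>, y \<otimes>\<^bsub>C\<^esub> c0)"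
        by (rule phi_add[OF hphi]) (use xy gcc0 c0 in auto)
      also have "\<dots> = t \<otimes>\<^bsub>R\<^esub> (\<psi> x \<oplus>\<^bsub>R\<^esub> \<psi> y)"
        using px py tR by (simp add: R.r_distr)
      finally show "\<phi> (\<zero>\<^bsub>B\<^esub>, (x \<oplus>\<^bsub>C\<^esub> y) \<otimes>\<^bsub>C\<^esub> c0) = t \<otimes>\<^bsub>R\<^esub> (\<psi> x \<oplus>\<^bsub>R\<^esub> \<psi> y)" .
    qed
    show "\<psi> \<one>\<^bsub>C\<^esub> = \<one>\<^bsub>R\<^esub>"
      by (rule uniq) (use c0 tR t_def in auto)
  qed
  interpret ps: ring_hom_cring C R \<psi> by unfold_locales (rule hpsi)
  show ?thesis
  proof (intro bexI[OF _ hpsi] conjI)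
    show "\<forall>x\<in>carrier ?A. \<psi> (snd x) = \<phi> x"
    proof
      fix x assume "x \<in> carrier ?A"
      then show "\<psi> (snd x) = \<phi> x" using agree[of "fst x" "snd x"] by simp
    qed
    show "\<forall>\<psi>'\<in>ring_hom C R. (\<forall>x\<in>carrier ?A. \<psi>' (snd x) = \<phi> x) \<longrightarrow> (\<forall>c\<in>carrier C. \<psi>' c = \<psi> c)"
    proof (intro ballI impI)
      fix \<psi>' c assume h': "\<psi>' \<in> ring_hom C R" and ag: "\<forall>x\<in>carrier ?A. \<psi>' (snd x) = \<phi> x"
        and cC: "c \<in> carrier C"
      have a0: "\<psi>' c0 = t" using ag[rule_format, of "(\<zero>\<^bsub>B\<^esub>, c0)"] c0 t_def by simp
      have a1: "\<psi>' (c \<otimes>\<^bsub>C\<^esub> c0) = \<phi> (\<zero>\<^bsub>B\<^esub>, c \<otimes>\<^bsub>C\<^esub> c0)"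
        using ag[rule_format, of "(\<zero>\<^bsub>B\<^esub>, c \<otimes>\<^bsub>C\<^esub> c0)"] cC c0 gcc0 by simp
      have "\<phi> (\<zero>\<^bsub>B\<^esub>, c \<otimes>\<^bsub>C\<^esub> c0) = t \<otimes>\<^bsub>R\<^esub> \<psi>' c"
        using a0 a1 ring_hom_mult[OF h' cC c0(1)] ring_hom_closed[OF h' cC] tR by (simp add: R.m_comm)
      then show "\<psi>' c = \<psi> c" using uniq[OF cC ring_hom_closed[OF h' cC]] by simp
    qed
    show "{P \<in> Spec_pts R. Spec_map C \<psi> P \<in> Spec_map C \<gamma> ` Spec_pts K} = {P \<in> Spec_pts R. maximalideal P R}"
    proof (intro Set.set_eqI iffI)
      fix P assume "P \<in> {P \<in> Spec_pts R. Spec_map C \<psi> P \<in> Spec_map C \<gamma> ` Spec_pts K}"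
      then have Pp: "primeideal P R" and "Spec_map C \<psi> P \<in> Spec_map C \<gamma> ` Spec_pts K"
        by (auto simp: Spec_pts_def)
      then obtain Q where Q: "primeideal Q K" "Spec_map C \<psi> P = Spec_map C \<gamma> Q"
        by (auto simp: Spec_pts_def)
      have Q0: "\<zero>\<^bsub>K\<^esub> \<in> Q"
        using additive_subgroup.zero_closed[OF ideal.axioms(1)[OF primeideal.axioms(1)[OF Q(1)]]] .
      have "\<phi> (\<zero>\<^bsub>B\<^esub>, d) \<in> P" if "d \<in> carrier C" "\<gamma> d = \<zero>\<^bsub>K\<^esub>" for d
      proof -
        have "d \<in> Spec_map C \<gamma> Q" using that Q0 by (simp add: Spec_map_def)
        then have "d \<in> Spec_map C \<psi> P" using Q(2) by simp
        then have "\<psi> d \<in> P" by (simp add: Spec_map_def)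
        then show ?thesis using kerpsi[OF that] by simp
      qed
      then have "maximalideal P R" using G' Pp by blast
      then show "P \<in> {P \<in> Spec_pts R. maximalideal P R}" using Pp by (simp add: Spec_pts_def)
    next
      fix P assume "P \<in> {P \<in> Spec_pts R. maximalideal P R}"
      then have Pp: "primeideal P R" by (simp add: Spec_pts_def)
      interpret P: primeideal P R by (rule Pp)
      have "P \<in> {P \<in> Spec_pts R. Spec_map ?A \<phi> P \<in> Spec_map ?A fst ` Spec_pts B}"
        using \<open>P \<in> {P \<in> Spec_pts R. maximalideal P R}\<close> by (simp only: assms(10))
      then obtain Qb where Qb: "primeideal Qb B" "Spec_map ?A \<phi> P = Spec_map ?A fst Qb"
        by (auto simp: Spec_pts_def)
      have Qb0: "\<zero>\<^bsub>B\<^esub> \<in> Qb"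
        using additive_subgroup.zero_closed[OF ideal.axioms(1)[OF primeideal.axioms(1)[OF Qb(1)]]] .
      have kerP: "\<psi> d \<in> P" if "d \<in> carrier C" "\<gamma> d = \<zero>\<^bsub>K\<^esub>" for d
      proof -
        have "(\<zero>\<^bsub>B\<^esub>, d) \<in> Spec_map ?A fst Qb" using that Qb0 by (simp add: Spec_map_def)
        then have "(\<zero>\<^bsub>B\<^esub>, d) \<in> Spec_map ?A \<phi> P" using Qb(2) by simp
        then have "\<phi> (\<zero>\<^bsub>B\<^esub>, d) \<in> P" by (simp add: Spec_map_def)
        then show ?thesis using kerpsi[OF that] by simp
      qed
      have surjE: "\<exists>y\<in>carrier C. x = \<gamma> y" if "x \<in> carrier K" for x
        using that by (simp add: assms(6)[symmetric] image_iff)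
      define J where "J = Spec_map C \<psi> P"
      have memJ: "c \<in> J \<longleftrightarrow> c \<in> carrier C \<and> \<psi> c \<in> P" for c by (simp add: J_def Spec_map_def)
      have Jk: "c \<in> J" if "c \<in> carrier C" "c' \<in> J" "\<gamma> c = \<gamma> c'" for c c'
      proof -
        have c': "c' \<in> carrier C" "\<psi> c' \<in> P" using that(2) memJ by auto
        have dC: "c \<ominus>\<^bsub>C\<^esub> c' \<in> carrier C" using that(1) c' by simp
        have "\<gamma> (c \<ominus>\<^bsub>C\<^esub> c') = \<gamma> c \<oplus>\<^bsub>K\<^esub> \<ominus>\<^bsub>K\<^esub> \<gamma> c'"
          using that(1) c'(1) by (simp add: a_minus_def)
        also have "\<dots> = \<zero>\<^bsub>K\<^esub>" using c'(1) by (simp add: that(3) K.r_neg)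
        finally have gd: "\<gamma> (c \<ominus>\<^bsub>C\<^esub> c') = \<zero>\<^bsub>K\<^esub>" .
        have e: "c = c' \<oplus>\<^bsub>C\<^esub> (c \<ominus>\<^bsub>C\<^esub> c')" using that(1) c'(1)
          by (simp add: a_minus_def C.a_comm[of c "\<ominus>\<^bsub>C\<^esub> c'"] C.r_neg2)
        have "\<psi> c = \<psi> c' \<oplus>\<^bsub>R\<^esub> \<psi> (c \<ominus>\<^bsub>C\<^esub> c')" by (subst e, rule ps.hom_add) (use c' dC in auto)
        then have "\<psi> c \<in> P" using c'(2) kerP[OF dC gd] by simp
        then show ?thesis using memJ that(1) by simp
      qed
      have JC: "J \<subseteq> carrier C" using memJ by auto
      have eqSM: "Spec_map C \<gamma> (\<gamma> ` J) = J"
      proof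
        show "Spec_map C \<gamma> (\<gamma> ` J) \<subseteq> J"
        proof
          fix c assume "c \<in> Spec_map C \<gamma> (\<gamma> ` J)"
          then have c: "c \<in> carrier C" "\<gamma> c \<in> \<gamma> ` J" by (simp_all add: Spec_map_def)
          from c(2) obtain j where "\<gamma> c = \<gamma> j" "j \<in> J" by (rule imageE)
          then show "c \<in> J" using Jk[OF c(1)] by blast
        qed
        show "J \<subseteq> Spec_map C \<gamma> (\<gamma> ` J)" using JC unfolding Spec_map_def by auto
      qed
      have "primeideal (\<gamma> ` J) K"
      proof (rule primeidealI)
        show "ideal (\<gamma> ` J) K"
        proof (rule K.ideal_crit)
          show "\<gamma> ` J \<subseteq> carrier K" using JC by auto
          have "\<zero>\<^bsub>C\<^esub> \<in> J" using memJ by simp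
          then show "\<zero>\<^bsub>K\<^esub> \<in> \<gamma> ` J" by (metis g.hom_zero image_eqI)
          show "a \<oplus>\<^bsub>K\<^esub> b \<in> \<gamma> ` J" if H: "a \<in> \<gamma> ` J" "b \<in> \<gamma> ` J" for a b
          proof -
            obtain a' b' where ab: "a' \<in> J" "b' \<in> J" "a = \<gamma> a'" "b = \<gamma> b'" using H by blast
            then have "a' \<oplus>\<^bsub>C\<^esub> b' \<in> J" using memJ by simp
            moreover have "a \<oplus>\<^bsub>K\<^esub> b = \<gamma> (a' \<oplus>\<^bsub>C\<^esub> b')" using ab memJ by simp
            ultimately show ?thesis by blast
          qed
          show "x \<otimes>\<^bsub>K\<^esub> a \<in> \<gamma> ` J" if H: "a \<in> \<gamma> ` J" "x \<in> carrier K" for a x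
          proof -
            obtain a' where a: "a' \<in> J" "a = \<gamma> a'" using H by blast
            obtain y where y: "y \<in> carrier C" "x = \<gamma> y" using surjE[OF H(2)] by blast
            have "y \<otimes>\<^bsub>C\<^esub> a' \<in> J" using memJ a y P.I_l_closed by simp
            moreover have "x \<otimes>\<^bsub>K\<^esub> a = \<gamma> (y \<otimes>\<^bsub>C\<^esub> a')" using a y memJ by simp
            ultimately show ?thesis by blast
          qed
        qed
        show "cring K" by (rule K.is_cring)
        show "carrier K \<noteq> \<gamma> ` J"
        proof
          assume "carrier K = \<gamma> ` J"
          then obtain j where "j \<in> J" "\<one>\<^bsub>K\<^esub> = \<gamma> j" by (metis K.one_closed imageE)
          then have "\<one>\<^bsub>C\<^esub> \<in> J" using Jk[of "\<one>\<^bsub>C\<^esub>" j] by simp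
          then have "\<one>\<^bsub>R\<^esub> \<in> P" using memJ by simp
          then show False using P.I_notcarr P.one_imp_carrier by blast
        qed
        show "a \<in> \<gamma> ` J \<or> b \<in> \<gamma> ` J" if H: "a \<in> carrier K" "b \<in> carrier K" "a \<otimes>\<^bsub>K\<^esub> b \<in> \<gamma> ` J" for a b
        proof -
          obtain a' where a: "a' \<in> carrier C" "a = \<gamma> a'" using surjE[OF H(1)] by blast
          obtain b' where b: "b' \<in> carrier C" "b = \<gamma> b'" using surjE[OF H(2)] by blast
          obtain j where j: "j \<in> J" "a \<otimes>\<^bsub>K\<^esub> b = \<gamma> j" using H(3) by blast
          have "a' \<otimes>\<^bsub>C\<^esub> b' \<in> J" using Jk[of "a' \<otimes>\<^bsub>C\<^esub> b'" j] a b j by simp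
          then have "\<psi> a' \<otimes>\<^bsub>R\<^esub> \<psi> b' \<in> P" using memJ a b by simp
          then have "\<psi> a' \<in> P \<or> \<psi> b' \<in> P" using P.I_prime a b by simp
          then have "a' \<in> J \<or> b' \<in> J" using memJ a b by simp
          then show ?thesis using a b by blast
        qed
      qed
      then have "Spec_map C \<psi> P \<in> Spec_map C \<gamma> ` Spec_pts K"
        using eqSM unfolding J_def Spec_pts_def by (metis (mono_tags) image_eqI mem_Collect_eq)
      then show "P \<in> {P \<in> Spec_pts R. Spec_map C \<psi> P \<in> Spec_map C \<gamma> ` Spec_pts K}"
        using Pp by (simp add: Spec_pts_def)
    qed
  qed
qed
end
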